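(* Every perfect binary tree is odd prime.
   Context: All graphs are finite and simple. A graph $G$ of order $N$ is odd prime if there is a bijection $\ell:V(G)\to\{1,3,\ldots,2N-1\}$ with $\gcd(\ell(u),\ell(v))=1$ for every edge $uv$. A perfect binary tree with $n\ge 1$ levels is a rooted tree in which every non-leaf vertex has exactly two children and all leaves lie on the same level; level $i$ has $2^{i-1}$ vertices, $1\le i\le n$. *)

theory Defs
  imports Main
begin

definition simple_graph :: "'a set \<Rightarrow> 'a set set \<Rightarrow> bool" where
  "simple_graph V E \<longleftrightarrow> finite V \<and> (\<forall>e\<in>E. \<exists>u v. e = {u, v} \<and> u \<noteq> v \<and> u \<in> V \<and> v \<in> V)"

definition odd_prime :: "'a set \<Rightarrow> 'a set set \<Rightarrow> bool" where
  "odd_prime V E \<longleftrightarrow> (\<exists>l :: 'a \<Rightarrow> nat.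
     bij_betw l V {m. odd m \<and> m \<le> 2 * card V - 1} \<and>
     (\<forall>u v. {u, v} \<in> E \<longrightarrow> coprime (l u) (l v)))"

text \<open>Canonical perfect binary tree with n levels (heap indexing): vertices 1..2^n-1,
  vertex k has children 2k and 2k+1; level i consists of 2^(i-1) .. 2^i - 1.\<close>
definition pbt_verts :: "nat \<Rightarrow> nat set" where
  "pbt_verts n = {1..2 ^ n - 1}"

definition pbt_edges :: "nat \<Rightarrow> nat set set" where
  "pbt_edges n = {{k, c} | k c. 1 \<le> k \<and> (c = 2 * k \<or> c = 2 * k + 1) \<and> c \<le> 2 ^ n - 1}"

definition perfect_binary_tree :: "'a set \<Rightarrow> 'a set set \<Rightarrow> nat \<Rightarrow> bool" where
  "perfect_binary_tree V E n \<longleftrightarrow> n \<ge> 1 \<and> simple_graph V E \<and>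
     (\<exists>f. bij_betw f V (pbt_verts n) \<and>
          (\<forall>u\<in>V. \<forall>v\<in>V. {u, v} \<in> E \<longleftrightarrow> {f u, f v} \<in> pbt_edges n))"

end

theory Submission
  imports Defs
begin

definition glab :: "nat \<Rightarrow> nat \<Rightarrow> nat" where
  "glab N k = (if k = N then 1 else 2 * k + 1)"

lemma glab_bij:
  assumes N1: "N \<ge> 1"
  shows "bij_betw (glab N) {1..N} {m. odd m \<and> m \<le> 2 * N - 1}"
proof (rule bij_betw_imageI)
  show "inj_on (glab N) {1..N}"
    unfolding inj_on_def glab_def by auto
  show "glab N ` {1..N} = {m. odd m \<and> m \<le> 2 * N - 1}"
  proof
    show "glab N ` {1..N} \<subseteq> {m. odd m \<and> m \<le> 2 * N - 1}"
      using N1 by (auto simp: glab_def)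
    show "{m. odd m \<and> m \<le> 2 * N - 1} \<subseteq> glab N ` {1..N}"
    proof
      fix m assume m: "m \<in> {m. odd m \<and> m \<le> 2 * N - 1}"
      show "m \<in> glab N ` {1..N}"
      proof (cases "m = 1")
        case True
        then have "m = glab N N" by (simp add: glab_def)
        then show ?thesis using N1 by auto
      next
        case False
        obtain k where k0: "m = 2 * k + 1" using m by (auto elim: oddE)
        have k1: "k \<ge> 1" using k0 False by auto
        have "k < N" using m k0 by auto
        then have "m = glab N k" using k0 by (simp add: glab_def)
        then show ?thesis using k1 \<open>k < N\<close> by auto
      qed
    qed
  qed
qed

lemma cop1: "coprime (2 * k + 1) (4 * k + 1 :: nat)"
proof (rule coprimeI)
  fix d assume a: "d dvd 2 * k + 1" and b: "d dvd 4 * k + 1"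
  have "d dvd 2 * (2 * k + 1)" using a by (rule dvd_mult)
  then have "d dvd 2 * (2 * k + 1) - (4 * k + 1)" using b by (rule dvd_diff_nat)
  then show "is_unit d" by simp
qed

lemma cop2: "coprime (2 * k + 1) (4 * k + 3 :: nat)"
proof (rule coprimeI)
  fix d assume a: "d dvd 2 * k + 1" and b: "d dvd 4 * k + 3"
  have "d dvd 2 * (2 * k + 1)" using a by (rule dvd_mult)
  with b have "d dvd (4 * k + 3) - 2 * (2 * k + 1)" by (rule dvd_diff_nat)
  then show "is_unit d" by simp
qed

lemma glab_edge:
  assumes "1 \<le> k" "c = 2 * k \<or> c = 2 * k + 1" "c \<le> N"
  shows "coprime (glab (N) k) (glab (N) c)"
proof (cases "c = N")
  case True then show ?thesis by (simp add: glab_def)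
next
  case False
  have "k \<noteq> N" using assms by auto
  then have g: "glab (N) k = 2 * k + 1" "glab (N) c = 2 * c + 1" using False by (auto simp: glab_def)
  from assms(2) show ?thesis
  proof
    assume "c = 2 * k" then have "2 * c + 1 = 4 * k + 1" by simp
    then show ?thesis using g cop1[of k] by simp
  next
    assume "c = 2 * k + 1" then have "2 * c + 1 = 4 * k + 3" by simp
    moreover have "4 * k + 3 = Suc (Suc (Suc (4 * k)))" by simp
    ultimately show ?thesis using g cop2[of k] by metis
  qed
qed

theorem theorem4p3:
  fixes V :: "'a set" and E :: "'a set set" and n :: nat
  assumes "perfect_binary_tree V E n"
  shows "odd_prime V E"
proof -
  from assms have n1: "n \<ge> 1" and sg: "simple_graph V E" and
    "\<exists>f. bij_betw f V (pbt_verts n) \<and>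
          (\<forall>u\<in>V. \<forall>v\<in>V. {u, v} \<in> E \<longleftrightarrow> {f u, f v} \<in> pbt_edges n)"
    by (auto simp: perfect_binary_tree_def)
  then obtain f where f: "bij_betw f V (pbt_verts n)"
    and fe: "\<forall>u\<in>V. \<forall>v\<in>V. {u, v} \<in> E \<longleftrightarrow> {f u, f v} \<in> pbt_edges n" by blast
  have "(2::nat) ^ n \<ge> 2 ^ 1" using n1 by (intro power_increasing) auto
  then have N1: "2 ^ n - 1 \<ge> (1::nat)" by simp
  have cV: "card V = 2 ^ n - 1" using bij_betw_same_card[OF f] by (simp add: pbt_verts_def)
  have b: "bij_betw (glab (2 ^ n - 1) \<circ> f) V {m. odd m \<and> m \<le> 2 * card V - 1}"
    using bij_betw_trans[OF f[unfolded pbt_verts_def] glab_bij[OF N1]] cV by simp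
  have c: "coprime ((glab (2 ^ n - 1) \<circ> f) u) ((glab (2 ^ n - 1) \<circ> f) v)" if e: "{u, v} \<in> E" for u v
  proof -
    obtain a b where ab: "{u, v} = {a, b}" "a \<in> V" "b \<in> V"
      using sg e unfolding simple_graph_def by blast
    have uv: "u \<in> V" "v \<in> V" using ab by (auto simp: doubleton_eq_iff)
    have "{f u, f v} \<in> pbt_edges n" using fe uv e by blast
    then obtain k c where kc: "{f u, f v} = {k, c}" "1 \<le> k" "c = 2 * k \<or> c = 2 * k + 1" "c \<le> 2 ^ n - 1"
      unfolding pbt_edges_def by blast
    have "coprime (glab (2 ^ n - 1) k) (glab (2 ^ n - 1) c)" using glab_edge[of k c "2 ^ n - 1"] kc(2-4) by blast
    then show ?thesis using kc(1)
      by (auto simp: doubleton_eq_iff coprime_commute)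
  qed
  show ?thesis unfolding odd_prime_def using b c by blast
qed

end
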